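(* Let $\mathscr{A}$ be a finite alphabet, $\Xi\subseteq\mathscr{A}^{\mathbb{Z}}$ a subshift and $(\mathscr{G}_k)_{k\in\mathbb{N}}$ its GAP-graphs. (i) If $\Xi$ contains no periodic element, then for each $m\in\mathbb{N}$ there is $k_0\in\mathbb{N}$ such that for all $k\geq k_0$ the graph $\mathscr{G}_k$ has no closed path of length smaller than or equal to $m$; in particular the graphs $\mathscr{G}_k$ are simple for all sufficiently large $k$. (ii) If $\Xi$ contains an element $\eta$ of period $m$, then every $\mathscr{G}_k$ has a closed path of length $m$. (iii) If $\Xi=\mathrm{Orb}(\eta)$ where $\eta$ is periodic with period $m$, then $\mathscr{G}_k$ has no branching vertex for $k\geq m-1$.
   Context: $\mathscr{A}^{\mathbb{Z}}$ has the product topology and shift $(T\xi)(j)=\xi(j-1)$; a subshift is a non-empty closed $T$-invariant subset. $\eta$ is periodic if $T^n\eta=\eta$ for some $n\geq1$, and its period is the least such $n$; $\mathrm{Orb}(\eta)=\{T^n\eta:n\in\mathbb{Z}\}$. $\mathcal{D}(\Xi)$ is the set of finite subwords of elements of $\Xi$. The GAP-graph $\mathscr{G}_k$ has vertex set $\mathcal{D}(\Xi)\cap\mathscr{A}^k$, edge set $\mathcal{D}(\Xi)\cap\mathscr{A}^{k+1}$, edge $e=a_0\cdots a_k$ going from $\partial_0e=a_0\cdots a_{k-1}$ to $\partial_1e=a_1\cdots a_k$. A closed path of length $m$ is $(e_1,\dots,e_m)$ with $\partial_1e_i=\partial_0e_{i+1}$ and $\partial_1e_m=\partial_0e_1$.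 A graph is simple if no edge has equal origin and end and for any two vertices there is at most one edge from the first to the second. The degree of a vertex is its number of incoming plus outgoing edges; a vertex is dandling if it has only incoming or only outgoing edges; a vertex is branching if it is not dandling and has degree $>2$. *)

theory Defs
  imports "HOL-Analysis.Analysis"
begin

definition shift :: "(int \<Rightarrow> 'a) \<Rightarrow> (int \<Rightarrow> 'a)" where
  "shift \<xi> = (\<lambda>j. \<xi> (j - 1))"

definition config_top :: "(int \<Rightarrow> 'a) topology" where
  "config_top = product_topology (\<lambda>_. discrete_topology UNIV) UNIV"

definition subshift :: "(int \<Rightarrow> 'a) set \<Rightarrow> bool" where
  "subshift \<Xi> \<longleftrightarrow> \<Xi> \<noteq> {} \<and> closedin config_top \<Xi> \<and> shift ` \<Xi> = \<Xi>"

definition periodic :: "(int \<Rightarrow> 'a) \<Rightarrow> bool" where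
  "periodic \<eta> \<longleftrightarrow> (\<exists>n\<ge>1. (shift ^^ n) \<eta> = \<eta>)"

definition has_period :: "(int \<Rightarrow> 'a) \<Rightarrow> nat \<Rightarrow> bool" where
  "has_period \<eta> m \<longleftrightarrow> m \<ge> 1 \<and> (shift ^^ m) \<eta> = \<eta> \<and> (\<forall>n. 1 \<le> n \<and> n < m \<longrightarrow> (shift ^^ n) \<eta> \<noteq> \<eta>)"

definition orbit :: "(int \<Rightarrow> 'a) \<Rightarrow> (int \<Rightarrow> 'a) set" where
  "orbit \<eta> = {\<xi>. \<exists>n::int. \<xi> = (\<lambda>j. \<eta> (j - n))}"

definition subword :: "(int \<Rightarrow> 'a) \<Rightarrow> int \<Rightarrow> nat \<Rightarrow> 'a list" where
  "subword \<xi> i l = map (\<lambda>n. \<xi> (i + int n)) [0..<l]"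

definition language :: "(int \<Rightarrow> 'a) set \<Rightarrow> 'a list set" where
  "language \<Xi> = {w. \<exists>\<xi>\<in>\<Xi>. \<exists>i. w = subword \<xi> i (length w)}"

definition gap_vertices :: "(int \<Rightarrow> 'a) set \<Rightarrow> nat \<Rightarrow> 'a list set" where
  "gap_vertices \<Xi> k = {w \<in> language \<Xi>. length w = k}"

definition gap_edges :: "(int \<Rightarrow> 'a) set \<Rightarrow> nat \<Rightarrow> 'a list set" where
  "gap_edges \<Xi> k = {w \<in> language \<Xi>. length w = k + 1}"

definition src :: "'a list \<Rightarrow> 'a list" where "src e = butlast e"
definition tgt :: "'a list \<Rightarrow> 'a list" where "tgt e = tl e"

definition closed_path :: "(int \<Rightarrow> 'a) set \<Rightarrow> nat \<Rightarrow> 'a list list \<Rightarrow> bool" where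
  "closed_path \<Xi> k es \<longleftrightarrow> es \<noteq> [] \<and> set es \<subseteq> gap_edges \<Xi> k \<and>
     (\<forall>i. i + 1 < length es \<longrightarrow> tgt (es ! i) = src (es ! (i + 1))) \<and>
     tgt (last es) = src (hd es)"

definition gap_simple :: "(int \<Rightarrow> 'a) set \<Rightarrow> nat \<Rightarrow> bool" where
  "gap_simple \<Xi> k \<longleftrightarrow>
     (\<forall>e \<in> gap_edges \<Xi> k. src e \<noteq> tgt e) \<and>
     (\<forall>e \<in> gap_edges \<Xi> k. \<forall>e' \<in> gap_edges \<Xi> k. src e = src e' \<and> tgt e = tgt e' \<longrightarrow> e = e')"

definition in_edges :: "(int \<Rightarrow> 'a) set \<Rightarrow> nat \<Rightarrow> 'a list \<Rightarrow> 'a list set" where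
  "in_edges \<Xi> k v = {e \<in> gap_edges \<Xi> k. tgt e = v}"

definition out_edges :: "(int \<Rightarrow> 'a) set \<Rightarrow> nat \<Rightarrow> 'a list \<Rightarrow> 'a list set" where
  "out_edges \<Xi> k v = {e \<in> gap_edges \<Xi> k. src e = v}"

definition degree :: "(int \<Rightarrow> 'a) set \<Rightarrow> nat \<Rightarrow> 'a list \<Rightarrow> nat" where
  "degree \<Xi> k v = card (in_edges \<Xi> k v) + card (out_edges \<Xi> k v)"

definition dandling :: "(int \<Rightarrow> 'a) set \<Rightarrow> nat \<Rightarrow> 'a list \<Rightarrow> bool" where
  "dandling \<Xi> k v \<longleftrightarrow> in_edges \<Xi> k v = {} \<or> out_edges \<Xi> k v = {}"

definition branching :: "(int \<Rightarrow> 'a) set \<Rightarrow> nat \<Rightarrow> 'a list \<Rightarrow> bool" where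
  "branching \<Xi> k v \<longleftrightarrow> v \<in> gap_vertices \<Xi> k \<and> \<not> dandling \<Xi> k v \<and> degree \<Xi> k v > 2"

end

theory Submission
  imports Defs
begin

lemma shift_pow: "(shift ^^ n) \<xi> = (\<lambda>j. \<xi> (j - int n))"
  by (induction n) (auto simp: shift_def algebra_simps)

lemma length_subword[simp]: "length (subword \<xi> i l) = l"
  by (simp add: subword_def)

lemma nth_subword[simp]: "t < l \<Longrightarrow> subword \<xi> i l ! t = \<xi> (i + int t)"
  by (simp add: subword_def)

lemma subword_eq_iff: "subword \<xi> i l = subword \<zeta> i' l \<longleftrightarrow> (\<forall>t<l. \<xi> (i + int t) = \<zeta> (i' + int t))"
  by (simp add: list_eq_iff_nth_eq)

lemma take_subword: "n \<le> l \<Longrightarrow> take n (subword \<xi> i l) = subword \<xi> i n"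
  by (simp add: list_eq_iff_nth_eq)

lemma tl_subword: "tl (subword \<xi> i (Suc n)) = subword \<xi> (i + 1) n"
  by (simp add: list_eq_iff_nth_eq nth_tl algebra_simps)

lemma butlast_subword: "butlast (subword \<xi> i (Suc n)) = subword \<xi> i n"
  by (simp add: list_eq_iff_nth_eq nth_butlast)

lemma subword_Suc: "subword \<xi> i (Suc n) = subword \<xi> i n @ [\<xi> (i + int n)]"
  by (simp add: subword_def)

lemma subword_shifted: "subword (\<lambda>j. \<xi> (j - n)) i l = subword \<xi> (i - n) l"
  by (simp add: list_eq_iff_nth_eq algebra_simps)

lemma language_take: "w \<in> language \<Xi> \<Longrightarrow> l \<le> length w \<Longrightarrow> take l w \<in> language \<Xi>"
  unfolding language_def
  by (auto simp: take_subword min_def) (metis take_subword)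

lemma subshift_translate:
  assumes "subshift \<Xi>" "\<xi> \<in> \<Xi>"
  shows "(\<lambda>j. \<xi> (j - n)) \<in> \<Xi>"
proof -
  have sh: "shift ` \<Xi> = \<Xi>" using assms(1) by (simp add: subshift_def)
  have fw: "\<And>\<zeta>. \<zeta> \<in> \<Xi> \<Longrightarrow> (\<lambda>j. \<zeta> (j - 1)) \<in> \<Xi>"
    using sh unfolding shift_def by blast
  have bw: "\<And>\<zeta>. \<zeta> \<in> \<Xi> \<Longrightarrow> (\<lambda>j. \<zeta> (j + 1)) \<in> \<Xi>"
  proof -
    fix \<zeta> assume "\<zeta> \<in> \<Xi>"
    then obtain \<zeta>' where z: "\<zeta>' \<in> \<Xi>" "\<zeta> = shift \<zeta>'" using sh by blast
    have "(\<lambda>j. \<zeta> (j + 1)) = \<zeta>'" using z(2) by (auto simp: shift_def)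
    then show "(\<lambda>j. \<zeta> (j + 1)) \<in> \<Xi>" using z by simp
  qed
  have A: "(\<lambda>j. \<xi> (j - int k)) \<in> \<Xi>" for k
  proof (induction k)
    case 0 then show ?case using assms(2) by simp
  next
    case (Suc k)
    from fw[OF this] show ?case by (simp add: algebra_simps)
  qed
  have B: "(\<lambda>j. \<xi> (j + int k)) \<in> \<Xi>" for k
  proof (induction k)
    case 0 then show ?case using assms(2) by simp
  next
    case (Suc k)
    from bw[OF this] show ?case by (simp add: algebra_simps)
  qed
  show ?thesis
  proof (cases "n \<ge> 0")
    case True
    then show ?thesis using A[of "nat n"] by simp
  next
    case False
    then show ?thesis using B[of "nat (- n)"] by simp
  qed
qed

lemma subshift_closure:
  assumes "subshift \<Xi>" and lang: "\<And>i l. subword \<zeta> i l \<in> language \<Xi>"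
  shows "\<zeta> \<in> \<Xi>"
proof (rule ccontr)
  assume nz: "\<zeta> \<notin> \<Xi>"
  have "closedin config_top \<Xi>" using assms(1) by (simp add: subshift_def)
  then have op: "openin config_top (UNIV - \<Xi>)"
    by (simp add: closedin_def config_top_def)
  then obtain U where U: "finite {i \<in> (UNIV::int set). U i \<noteq> topspace (discrete_topology (UNIV::'a set))}"
      "\<zeta> \<in> Pi\<^sub>E UNIV U" "Pi\<^sub>E UNIV U \<subseteq> UNIV - \<Xi>"
    using nz unfolding config_top_def openin_product_topology_alt by blast
  define F where "F = {i. U i \<noteq> UNIV}"
  have fF: "finite F" using U(1) by (simp add: F_def)
  then obtain N :: nat where N: "\<forall>i\<in>F. \<bar>i\<bar> \<le> int N"
  proof -
    have "\<forall>i\<in>F. \<bar>i\<bar> \<le> (\<Sum>i\<in>F. \<bar>i\<bar>)"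
      using fF by (auto intro: member_le_sum)
    then show ?thesis using that[of "nat (\<Sum>i\<in>F. \<bar>i\<bar>)"] by force
  qed
  obtain \<xi> i0 where xi: "\<xi> \<in> \<Xi>" "subword \<zeta> (- int N) (2*N+1) = subword \<xi> i0 (2*N+1)"
    using lang[of "- int N" "2*N+1"] unfolding language_def by auto
  define \<xi>' where "\<xi>' = (\<lambda>j. \<xi> (j - (- int N - i0)))"
  have "\<xi>' \<in> \<Xi>" unfolding \<xi>'_def using subshift_translate[OF assms(1) xi(1)] .
  moreover have "\<xi>' \<in> Pi\<^sub>E UNIV U"
  proof -
    have "\<xi>' i \<in> U i" for i
    proof (cases "i \<in> F")
      case True
      then have b: "\<bar>i\<bar> \<le> int N" using N by auto
      define t where "t = nat (i + int N)"
      have t: "t < 2*N+1" "int t = i + int N" using b by (auto simp: t_def)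
      have "\<zeta> (- int N + int t) = \<xi> (i0 + int t)"
        using xi(2) t(1) unfolding subword_eq_iff by blast
      then have "\<xi>' i = \<zeta> i" using t(2) by (simp add: \<xi>'_def algebra_simps)
      then show ?thesis using U(2) by (auto simp: PiE_iff)
    next
      case False
      then show ?thesis by (simp add: F_def)
    qed
    then show ?thesis by (simp add: PiE_iff)
  qed
  ultimately show False using U(3) by blast
qed

lemma per_int:
  assumes "\<And>j. \<zeta> (j + int p) = \<zeta> j"
  shows "\<zeta> (j + c * int p) = \<zeta> j"
proof -
  have A: "\<zeta> (j + int n * int p) = \<zeta> j" for n j
  proof (induction n arbitrary: j)
    case (Suc n)
    have "\<zeta> (j + int (Suc n) * int p) = \<zeta> ((j + int n * int p) + int p)" by (simp add: algebra_simps)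
    also have "\<dots> = \<zeta> j" using assms Suc by simp
    finally show ?case .
  qed simp
  show ?thesis
  proof (cases "c \<ge> 0")
    case True then show ?thesis using A[where n="nat c" and j=j] by simp
  next
    case False
    have "\<zeta> ((j + c * int p) + int (nat (-c)) * int p) = \<zeta> (j + c * int p)" by (rule A)
    then show ?thesis using False by (simp add: algebra_simps)
  qed
qed

lemma per_mod:
  assumes "\<And>j. \<zeta> (j + int p) = \<zeta> j"
  shows "\<zeta> j = \<zeta> (j mod int p)"
  using per_int[of \<zeta> p "j mod int p" "j div int p"] assms
  by (simp add: algebra_simps mult.commute)

lemma per_cong:
  assumes "\<And>j. \<zeta> (j + int p) = \<zeta> j" "a mod int p = b mod int p"
  shows "\<zeta> a = \<zeta> b"
  using per_mod[of \<zeta> p] assms by metis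

lemma finite_per: assumes "L \<ge> 1" shows "finite {\<zeta> :: int \<Rightarrow> 'a::finite. \<forall>j. \<zeta> (j + int L) = \<zeta> j}" (is "finite ?P")
proof (rule finite_imageD)
  show "inj_on (\<lambda>\<zeta>. subword \<zeta> 0 L) ?P"
  proof (rule inj_onI)
    fix x y assume x: "x \<in> ?P" and y: "y \<in> ?P" and e: "subword x 0 L = subword y 0 L"
    show "x = y"
    proof
      fix j
      show "x j = y j"
      proof (cases "L = 0")
        case True then show ?thesis using \<open>L \<ge> 1\<close> by simp
      next
        case False
        define t where "t = nat (j mod int L)"
        have t: "t < L" "int t = j mod int L" using False by (auto simp: t_def nat_less_iff)
        have "x (0 + int t) = y (0 + int t)" using e t(1) unfolding subword_eq_iff by blast
        then show ?thesis using per_mod[of x L j] per_mod[of y L j] x y t(2) by simp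
      qed
    qed
  qed
  show "finite ((\<lambda>\<zeta>. subword \<zeta> 0 L) ` ?P)"
    by (rule finite_subset[OF _ finite_lists_length_eq[of "UNIV::'a set" L]]) auto
qed

lemma path_config:
  assumes cp: "closed_path \<Xi> k es"
  shows "\<exists>\<zeta>. (\<forall>j. \<zeta> (j + int (length es)) = \<zeta> j) \<and> (\<forall>i. subword \<zeta> i (k+1) \<in> language \<Xi>)"
proof -
  define p where "p = length es"
  have ne: "es \<noteq> []" and sub: "set es \<subseteq> gap_edges \<Xi> k"
    and ch: "\<And>i. i + 1 < p \<Longrightarrow> tl (es ! i) = butlast (es ! (i + 1))"
    and cl: "tl (last es) = butlast (hd es)"
    using cp by (auto simp: closed_path_def p_def src_def tgt_def)
  have p1: "p \<ge> 1" using ne by (simp add: p_def Suc_le_eq)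
  have len: "\<And>i. i < p \<Longrightarrow> length (es ! i) = k + 1"
    using sub by (auto simp: p_def gap_edges_def dest!: nth_mem)
  have inl: "\<And>i. i < p \<Longrightarrow> es ! i \<in> language \<Xi>"
    using sub by (auto simp: p_def gap_edges_def dest!: nth_mem)
  have step: "es ! ((i+1) mod p) ! t = es ! i ! (t+1)" if "i < p" "t < k" for i t
  proof (cases "i + 1 < p")
    case True
    have "tl (es ! i) ! t = butlast (es ! (i + 1)) ! t" using ch[OF True] by simp
    then show ?thesis using True that len[of i] len[of "i+1"] by (simp add: nth_tl nth_butlast)
  next
    case False
    then have i: "i = p - 1" using that by simp
    have "tl (last es) ! t = butlast (hd es) ! t" using cl by simp
    moreover have "last es = es ! i" using ne i by (simp add: last_conv_nth p_def)
    moreover have "hd es = es ! 0" using ne by (simp add: hd_conv_nth)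
    ultimately show ?thesis using i p1 that len[of i] len[of 0] by (simp add: nth_tl nth_butlast)
  qed
  define E where "E j = es ! nat (j mod int p)" for j
  define \<zeta> where "\<zeta> j = E j ! 0" for j
  have Estep: "E (j + 1) ! t = E j ! (t + 1)" if "t < k" for j t
  proof -
    define i where "i = nat (j mod int p)"
    have i: "i < p" "int i = j mod int p" using p1 by (auto simp: i_def nat_less_iff)
    have "int ((i + 1) mod p) = (j + 1) mod int p"
      using i(2) by (simp add: zmod_int mod_add_right_eq add.commute)
    then have "nat ((j + 1) mod int p) = (i + 1) mod p" by linarith
    then show ?thesis using step[OF i(1) that] by (simp add: E_def i_def)
  qed
  have key: "\<forall>j. \<zeta> (j + int t) = E j ! t" if "t \<le> k" for t
    using that
  proof (induction t)
    case 0 then show ?case by (simp add: \<zeta>_def)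
  next
    case (Suc t)
    show ?case
    proof
      fix j
      have "\<zeta> (j + int (Suc t)) = \<zeta> ((j + 1) + int t)" by (simp add: algebra_simps)
      also have "\<dots> = E (j + 1) ! t" using Suc by simp
      also have "\<dots> = E j ! Suc t" using Estep[of t j] Suc(2) by simp
      finally show "\<zeta> (j + int (Suc t)) = E j ! Suc t" .
    qed
  qed
  have Emem: "E j \<in> language \<Xi> \<and> length (E j) = k + 1" for j
  proof -
    have "nat (j mod int p) < p" using p1 by (auto simp: nat_less_iff)
    then show ?thesis using inl len by (simp add: E_def)
  qed
  have sw: "subword \<zeta> j (k+1) = E j" for j
    using Emem[of j] key by (simp add: list_eq_iff_nth_eq)
  have per: "\<zeta> (j + int p) = \<zeta> j" for j
    by (simp add: \<zeta>_def E_def)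
  show ?thesis using per sw Emem unfolding p_def by metis
qed

lemma part1:
  fixes \<Xi> :: "(int \<Rightarrow> 'a::finite) set"
  assumes sub: "subshift \<Xi>" and np: "\<forall>\<eta>\<in>\<Xi>. \<not> periodic \<eta>"
  shows "\<exists>k0. \<forall>k\<ge>k0. \<not> (\<exists>es. closed_path \<Xi> k es \<and> length es \<le> m)"
proof (rule ccontr)
  assume "\<not> ?thesis"
  then have unb: "\<forall>k0. \<exists>k\<ge>k0. \<exists>es. closed_path \<Xi> k es \<and> length es \<le> m" by blast
  define K where "K = {k. \<exists>es. closed_path \<Xi> k es \<and> length es \<le> m}"
  have infK: "infinite K" using unb unfolding K_def infinite_nat_iff_unbounded_le by blast
  define L :: nat where "L = fact m"
  have L1: "L \<ge> 1" by (simp add: L_def)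
  define P where "P = {\<zeta> :: int \<Rightarrow> 'a. \<forall>j. \<zeta> (j + int L) = \<zeta> j}"
  have ex: "\<exists>\<zeta>. \<zeta> \<in> P \<and> (\<forall>i. subword \<zeta> i (k+1) \<in> language \<Xi>)" if kK: "k \<in> K" for k
  proof -
    obtain es where es: "closed_path \<Xi> k es" "length es \<le> m" using kK unfolding K_def by auto
    obtain \<zeta> where z: "\<forall>j. \<zeta> (j + int (length es)) = \<zeta> j" "\<forall>i. subword \<zeta> i (k+1) \<in> language \<Xi>"
      using path_config[OF es(1)] by blast
    have "length es \<ge> 1" using es(1) by (simp add: closed_path_def Suc_le_eq)
    then have "length es dvd L" using es(2) by (simp add: dvd_fact L_def)
    then obtain c where c: "L = length es * c" by blast
    have "\<zeta> (j + int L) = \<zeta> j" for j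
      using per_int[of \<zeta> "length es" j "int c"] z(1) c by (simp add: algebra_simps)
    then show ?thesis using z(2) by (auto simp: P_def)
  qed
  define f where "f k = (SOME \<zeta>. \<zeta> \<in> P \<and> (\<forall>i. subword \<zeta> i (k+1) \<in> language \<Xi>))" for k
  have fk: "f k \<in> P \<and> (\<forall>i. subword (f k) i (k+1) \<in> language \<Xi>)" if "k \<in> K" for k
    using someI_ex[OF ex[OF that]] unfolding f_def by simp
  have "finite (f ` K)"
    by (rule finite_subset[OF _ finite_per[OF L1]]) (use fk in \<open>auto simp: P_def\<close>)
  then obtain k0 where k0: "k0 \<in> K" "infinite {k\<in>K. f k = f k0}"
    using pigeonhole_infinite[OF infK] by blast
  define \<zeta> where "\<zeta> = f k0"
  have "\<zeta> \<in> \<Xi>"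
  proof (rule subshift_closure[OF sub])
    fix i l
    obtain k where k: "k \<in> K" "f k = f k0" "l \<le> k"
      using k0(2) unfolding infinite_nat_iff_unbounded_le by auto
    have "subword \<zeta> i (k+1) \<in> language \<Xi>" using fk[OF k(1)] k(2) \<zeta>_def by auto
    then have "take l (subword \<zeta> i (k+1)) \<in> language \<Xi>" by (rule language_take) (use k(3) in simp)
    then show "subword \<zeta> i l \<in> language \<Xi>" using k(3) by (simp add: take_subword)
  qed
  moreover have "periodic \<zeta>"
  proof -
    have zP: "\<zeta> \<in> P" using fk[OF k0(1)] \<zeta>_def by simp
    have "(\<lambda>j. \<zeta> (j - int L)) = \<zeta>"
    proof
      fix j
      have "\<zeta> ((j - int L) + int L) = \<zeta> (j - int L)" using zP unfolding P_def by blast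
      then show "\<zeta> (j - int L) = \<zeta> j" by simp
    qed
    then show ?thesis unfolding periodic_def shift_pow using L1 by blast
  qed
  ultimately show False using np by blast
qed

lemma period_shift:
  assumes "(shift ^^ m) \<eta> = \<eta>"
  shows "\<eta> (j + int m) = \<eta> j"
proof -
  have "(\<lambda>j. \<eta> (j - int m)) = \<eta>" using assms by (simp add: shift_pow)
  then have "\<eta> ((j + int m) - int m) = \<eta> (j + int m)" by metis
  then show ?thesis by simp
qed

lemma subword_in_language: "\<xi> \<in> \<Xi> \<Longrightarrow> subword \<xi> i l \<in> language \<Xi>"
  unfolding language_def by auto

lemma part2:
  assumes "\<eta> \<in> \<Xi>" "has_period \<eta> m"
  shows "\<exists>es. closed_path \<Xi> k es \<and> length es = m"
proof -
  have m1: "m \<ge> 1" and per: "\<And>j. \<eta> (j + int m) = \<eta> j"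
    using assms(2) period_shift by (auto simp: has_period_def)
  define es where "es = map (\<lambda>i. subword \<eta> (int i) (Suc k)) [0..<m]"
  have "closed_path \<Xi> k es"
    unfolding closed_path_def
  proof (intro conjI allI impI)
    show "es \<noteq> []" using m1 by (simp add: es_def)
    show "set es \<subseteq> gap_edges \<Xi> k"
      using assms(1) by (auto simp: es_def gap_edges_def subword_in_language)
    fix i assume i: "i + 1 < length es"
    then show "tgt (es ! i) = src (es ! (i + 1))"
      by (simp add: es_def tgt_def src_def tl_subword butlast_subword nth_append add.commute)
  next
    have "last es = subword \<eta> (int (m - 1)) (Suc k)"
      using m1 by (simp add: es_def last_map)
    then have "tgt (last es) = subword \<eta> (int m) k"
      using m1 by (simp add: tgt_def tl_subword of_nat_diff)
    also have "\<dots> = subword \<eta> 0 k"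
      using per by (simp add: subword_eq_iff add.commute add.left_commute)
    also have "\<dots> = src (hd es)"
      using m1 by (simp add: es_def src_def butlast_subword hd_map)
    finally show "tgt (last es) = src (hd es)" .
  qed
  then show ?thesis by (auto simp: es_def)
qed

lemma sub_cong:
  assumes per: "\<And>j. \<eta> (j + int m) = \<eta> j" and c: "i mod int m = i' mod int m"
  shows "subword \<eta> i l = subword \<eta> i' l"
proof -
  have "\<eta> (i + int t) = \<eta> (i' + int t)" for t
  proof (rule per_cong[of \<eta> m])
    show "\<eta> (j + int m) = \<eta> j" for j by (rule per)
    show "(i + int t) mod int m = (i' + int t) mod int m"
      using c by (metis mod_add_left_eq)
  qed
  then show ?thesis by (simp add: subword_eq_iff)
qed

definition good :: "(int \<Rightarrow> 'a) \<Rightarrow> nat \<Rightarrow> bool" where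
  "good \<eta> n \<longleftrightarrow> (\<forall>i i'. subword \<eta> i n = subword \<eta> i' n \<longrightarrow> \<eta> (i + int n) = \<eta> (i' + int n))"

definition det :: "(int \<Rightarrow> 'a) \<Rightarrow> nat \<Rightarrow> nat \<Rightarrow> bool" where
  "det \<eta> m n \<longleftrightarrow> (\<forall>i i'. subword \<eta> i n = subword \<eta> i' n \<longrightarrow> i mod int m = i' mod int m)"

lemma det_mono: "det \<eta> m n \<Longrightarrow> n \<le> n' \<Longrightarrow> det \<eta> m n'"
  unfolding det_def by (metis take_subword)

lemma good_det:
  assumes per: "\<And>j. \<eta> (j + int m) = \<eta> j"
    and minp: "\<And>n. 1 \<le> n \<Longrightarrow> n < m \<Longrightarrow> \<not> (\<forall>j. \<eta> (j + int n) = \<eta> j)"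
    and g: "good \<eta> n" and m1: "m \<ge> 1"
  shows "det \<eta> m n"
  unfolding det_def
proof (intro allI impI)
  fix i i' assume eq: "subword \<eta> i n = subword \<eta> i' n"
  have prp: "subword \<eta> (i + int t) n = subword \<eta> (i' + int t) n" for t
  proof (induction t)
    case 0 then show ?case using eq by simp
  next
    case (Suc t)
    have "subword \<eta> (i + int t) (Suc n) = subword \<eta> (i' + int t) (Suc n)"
      using Suc g unfolding good_def subword_Suc by metis
    then have "tl (subword \<eta> (i + int t) (Suc n)) = tl (subword \<eta> (i' + int t) (Suc n))" by simp
    then show ?case by (simp add: tl_subword algebra_simps)
  qed
  have all: "\<eta> (i + int s + int n) = \<eta> (i' + int s + int n)" for s
    using prp[of s] g unfolding good_def by blast
  show "i mod int m = i' mod int m"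
  proof (rule ccontr)
    assume ne: "i mod int m \<noteq> i' mod int m"
    have m0: "m > 0" using m1 by simp
    define d where "d = (i' - i) mod int m"
    have d: "0 \<le> d" "d < int m" using m0 by (auto simp: d_def)
    have d0: "d \<noteq> 0"
    proof
      assume "d = 0"
      then have "int m dvd (i' - i)" by (simp add: d_def mod_eq_0_iff_dvd)
      then show False using ne by (metis mod_eq_dvd_iff)
    qed
    have "\<forall>j. \<eta> (j + int (nat d)) = \<eta> j"
    proof
      fix j
      define s where "s = nat ((j - i - int n) mod int m)"
      have s: "int s = (j - i - int n) mod int m" using m0 by (simp add: s_def)
      define a where "a = i + int s + int n"
      have ha: "\<eta> a = \<eta> (a + (i' - i))" using all[of s] by (simp add: a_def algebra_simps)
      have a_eq: "a = (i + int n) + (j - i - int n) mod int m" by (simp add: a_def s)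
      then have "a mod int m = ((i + int n) + (j - i - int n)) mod int m"
        by (simp add: mod_add_right_eq)
      then have am: "a mod int m = j mod int m" by simp
      moreover have "\<eta> j = \<eta> a"
        by (rule per_cong[of \<eta> m], rule per) (use am in simp)
      moreover have "\<eta> (j + int (nat d)) = \<eta> (a + (i' - i))"
      proof (rule per_cong[of \<eta> m], rule per)
        have "(j + int (nat d)) mod int m = (j + (i' - i)) mod int m"
          using d by (simp add: d_def mod_add_right_eq)
        also have "\<dots> = (j mod int m + (i' - i)) mod int m" by (simp add: mod_add_left_eq)
        also have "\<dots> = (a mod int m + (i' - i)) mod int m" using am by simp
        also have "\<dots> = (a + (i' - i)) mod int m" by (simp add: mod_add_left_eq)
        finally show "(j + int (nat d)) mod int m = (a + (i' - i)) mod int m" .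
      qed
      ultimately show "\<eta> (j + int (nat d)) = \<eta> j" using ha by simp
    qed
    moreover have "1 \<le> nat d" "nat d < m" using d d0 by auto
    ultimately show False using minp by blast
  qed
qed

definition Wn :: "(int \<Rightarrow> 'a) \<Rightarrow> nat \<Rightarrow> nat \<Rightarrow> 'a list set" where
  "Wn \<eta> m n = (\<lambda>i. subword \<eta> (int i) n) ` {0..<m}"

lemma nongood_card:
  assumes per: "\<And>j. \<eta> (j + int m) = \<eta> j" and m1: "m \<ge> 1" and ng: "\<not> good \<eta> n"
  shows "card (Wn \<eta> m n) < card (Wn \<eta> m (Suc n))"
proof -
  obtain i i' where ii: "subword \<eta> i n = subword \<eta> i' n" "\<eta> (i + int n) \<noteq> \<eta> (i' + int n)"
    using ng unfolding good_def by blast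
  define a where "a = nat (i mod int m)"
  define a' where "a' = nat (i' mod int m)"
  have a: "a < m" "int a mod int m = i mod int m" using m1 by (auto simp: a_def nat_less_iff)
  have a': "a' < m" "int a' mod int m = i' mod int m" using m1 by (auto simp: a'_def nat_less_iff)
  have sa: "subword \<eta> (int a) l = subword \<eta> i l" for l using sub_cong[of \<eta> m "int a" i l] per a(2) by blast
  have sa': "subword \<eta> (int a') l = subword \<eta> i' l" for l using sub_cong[of \<eta> m "int a'" i' l] per a'(2) by blast
  define x where "x = subword \<eta> (int a) (Suc n)"
  define y where "y = subword \<eta> (int a') (Suc n)"
  have xy: "x \<in> Wn \<eta> m (Suc n)" "y \<in> Wn \<eta> m (Suc n)"
    unfolding Wn_def x_def y_def using a(1) a'(1) by auto
  have x2: "x = subword \<eta> i (Suc n)" unfolding x_def by (rule sa)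
  have y2: "y = subword \<eta> i' (Suc n)" unfolding y_def by (rule sa')
  have "x \<noteq> y" using ii(2) unfolding x2 y2 subword_Suc by simp
  moreover have "take n x = take n y" using ii(1) unfolding x2 y2 by (simp add: take_subword)
  ultimately have ni: "\<not> inj_on (take n) (Wn \<eta> m (Suc n))" using xy by (meson inj_onD)
  have im: "take n ` Wn \<eta> m (Suc n) = Wn \<eta> m n"
    by (simp add: Wn_def image_image take_subword)
  have fin: "finite (Wn \<eta> m (Suc n))" by (simp add: Wn_def)
  have "card (take n ` Wn \<eta> m (Suc n)) \<le> card (Wn \<eta> m (Suc n))" by (rule card_image_le[OF fin])
  moreover have "card (take n ` Wn \<eta> m (Suc n)) \<noteq> card (Wn \<eta> m (Suc n))"
    using ni inj_on_iff_eq_card[OF fin] by blast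
  ultimately show ?thesis using im by simp
qed

lemma det_main:
  assumes per: "\<And>j. \<eta> (j + int m) = \<eta> j"
    and minp: "\<And>n. 1 \<le> n \<Longrightarrow> n < m \<Longrightarrow> \<not> (\<forall>j. \<eta> (j + int n) = \<eta> j)"
    and m1: "m \<ge> 1"
  shows "det \<eta> m (m - 1)"
proof (rule ccontr)
  assume nd: "\<not> det \<eta> m (m - 1)"
  have ng: "\<not> good \<eta> n" if "n \<le> m - 1" for n
    using good_det[OF per minp _ m1, of n] det_mono[of \<eta> m n "m - 1"] nd that by blast
  have c: "n \<le> m \<Longrightarrow> card (Wn \<eta> m n) \<ge> n + 1" for n
  proof (induction n)
    case 0
    have "Wn \<eta> m 0 = {[]}" using m1 unfolding Wn_def subword_def
      by (auto intro!: image_eqI[of _ _ 0])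
    then show ?case by simp
  next
    case (Suc n)
    then have "card (Wn \<eta> m n) < card (Wn \<eta> m (Suc n))"
      using nongood_card[OF per m1 ng[of n]] by simp
    then show ?case using Suc by simp
  qed
  have "card (Wn \<eta> m m) \<le> m" unfolding Wn_def
    using card_image_le[of "{0..<m}"] by (metis card_atLeastLessThan diff_zero finite_atLeastLessThan)
  then show False using c[of m] by simp
qed

lemma orbit_edge:
  assumes "e \<in> gap_edges (orbit \<eta>) k"
  shows "\<exists>i. e = subword \<eta> i (Suc k)"
proof -
  obtain \<xi> i where "\<xi> \<in> orbit \<eta>" "e = subword \<xi> i (length e)" "length e = Suc k"
    using assms unfolding gap_edges_def language_def by auto
  then obtain n where "e = subword (\<lambda>j. \<eta> (j - n)) i (Suc k)" unfolding orbit_def by auto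
  then show ?thesis by (auto simp: subword_shifted)
qed

lemma card_le1: "(\<And>x y. x \<in> A \<Longrightarrow> y \<in> A \<Longrightarrow> x = y) \<Longrightarrow> card A \<le> 1"
proof (cases "A = {}")
  case False
  assume h: "\<And>x y. x \<in> A \<Longrightarrow> y \<in> A \<Longrightarrow> x = y"
  obtain x where "x \<in> A" using False by blast
  then have "A = {x}" using h by blast
  then show ?thesis by simp
qed simp

lemma mod_shift_back:
  assumes "(a + 1) mod (M::int) = (b + 1) mod M"
  shows "a mod M = b mod M"
proof -
  have "((a + 1) + (-1)) mod M = ((b + 1) + (-1)) mod M"
    using assms by (metis mod_add_left_eq)
  then show ?thesis by simp
qed

lemma part3:
  assumes orb: "\<Xi> = orbit \<eta>" and hp: "has_period \<eta> m" and km: "m \<le> k + 1"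
  shows "\<not> branching \<Xi> k v"
proof -
  have m1: "m \<ge> 1" and per: "\<And>j. \<eta> (j + int m) = \<eta> j"
    using hp period_shift by (auto simp: has_period_def)
  have minp: "\<not> (\<forall>j. \<eta> (j + int n) = \<eta> j)" if "1 \<le> n" "n < m" for n
  proof
    assume h: "\<forall>j. \<eta> (j + int n) = \<eta> j"
    have "(\<lambda>j. \<eta> (j - int n)) = \<eta>"
    proof
      fix j
      have "\<eta> ((j - int n) + int n) = \<eta> (j - int n)" using h by blast
      then show "\<eta> (j - int n) = \<eta> j" by simp
    qed
    then have "(shift ^^ n) \<eta> = \<eta>" by (simp add: shift_pow)
    then show False using hp that by (auto simp: has_period_def)
  qed
  have dk: "det \<eta> m k"
    using det_mono[OF det_main[OF per minp m1]] km by simp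
  have ein: "x = y" if xyin: "x \<in> in_edges \<Xi> k v" "y \<in> in_edges \<Xi> k v" for x y
  proof -
    obtain i i' where xy: "x = subword \<eta> i (Suc k)" "y = subword \<eta> i' (Suc k)"
      using xyin orbit_edge orb unfolding in_edges_def by blast
    have "tl x = tl y" using xyin by (simp add: in_edges_def tgt_def)
    then have "subword \<eta> (i + 1) k = subword \<eta> (i' + 1) k" by (simp add: xy tl_subword)
    then have "(i + 1) mod int m = (i' + 1) mod int m" using dk unfolding det_def by blast
    then have "i mod int m = i' mod int m" by (rule mod_shift_back)
    then show ?thesis using xy sub_cong[of \<eta> m i i'] per by metis
  qed
  have eout: "x = y" if xyin: "x \<in> out_edges \<Xi> k v" "y \<in> out_edges \<Xi> k v" for x y
  proof -
    obtain i i' where xy: "x = subword \<eta> i (Suc k)" "y = subword \<eta> i' (Suc k)"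
      using xyin orbit_edge orb unfolding out_edges_def by blast
    have "butlast x = butlast y" using xyin by (simp add: out_edges_def src_def)
    then have "subword \<eta> i k = subword \<eta> i' k" by (simp add: xy butlast_subword)
    then have "i mod int m = i' mod int m" using dk unfolding det_def by blast
    then show ?thesis using xy sub_cong[of \<eta> m i i'] per by metis
  qed
  have "degree \<Xi> k v \<le> 2"
    using card_le1[of "in_edges \<Xi> k v", OF ein] card_le1[of "out_edges \<Xi> k v", OF eout]
    by (simp add: degree_def)
  then show ?thesis by (simp add: branching_def)
qed

lemma simple_from:
  assumes "\<forall>k\<ge>k0. \<not> (\<exists>es. closed_path \<Xi> k es \<and> length es \<le> 1)"
  shows "\<forall>k\<ge>max k0 1. gap_simple \<Xi> k"
proof (intro allI impI)
  fix k assume k: "max k0 1 \<le> k"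
  have nl: "src e \<noteq> tgt e" if "e \<in> gap_edges \<Xi> k" for e
  proof
    assume "src e = tgt e"
    then have "closed_path \<Xi> k [e]" using that by (simp add: closed_path_def)
    then show False using assms k by fastforce
  qed
  have uq: "e = e'" if "e \<in> gap_edges \<Xi> k" "e' \<in> gap_edges \<Xi> k" "src e = src e'" "tgt e = tgt e'" for e e'
  proof -
    have l: "length e = k + 1" "length e' = k + 1" using that by (auto simp: gap_edges_def)
    have "e = butlast e @ [last e]" using l by (metis append_butlast_last_id list.size(3) add_is_0 one_neq_zero)
    moreover have "e' = butlast e' @ [last e']" using l by (metis append_butlast_last_id list.size(3) add_is_0 one_neq_zero)
    moreover have "last e = last (tl e)" using l k by (cases e) auto
    moreover have "last e' = last (tl e')" using l k by (cases e') auto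
    ultimately show ?thesis using that(3,4) by (simp add: src_def tgt_def)
  qed
  show "gap_simple \<Xi> k" unfolding gap_simple_def using nl uq by blast
qed

theorem proposition8:
  fixes \<Xi> :: "(int \<Rightarrow> 'a::finite) set"
  assumes "subshift \<Xi>"
  shows "((\<forall>\<eta>\<in>\<Xi>. \<not> periodic \<eta>) \<longrightarrow>
            (\<forall>m. \<exists>k0. \<forall>k\<ge>k0. \<not> (\<exists>es. closed_path \<Xi> k es \<and> length es \<le> m)) \<and>
            (\<exists>k0. \<forall>k\<ge>k0. gap_simple \<Xi> k))
       \<and> (\<forall>\<eta> m. \<eta> \<in> \<Xi> \<and> has_period \<eta> m \<longrightarrow>
            (\<forall>k. \<exists>es. closed_path \<Xi> k es \<and> length es = m))
       \<and> (\<forall>\<eta> m. \<Xi> = orbit \<eta> \<and> has_period \<eta> m \<longrightarrow>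
            (\<forall>k. k + 1 \<ge> m \<longrightarrow> (\<forall>v. \<not> branching \<Xi> k v)))"
proof (intro conjI impI allI)
  assume np: "\<forall>\<eta>\<in>\<Xi>. \<not> periodic \<eta>"
  show "\<exists>k0. \<forall>k\<ge>k0. \<not> (\<exists>es. closed_path \<Xi> k es \<and> length es \<le> m)" for m
    by (rule part1[OF assms np])
  obtain k0 where "\<forall>k\<ge>k0. \<not> (\<exists>es. closed_path \<Xi> k es \<and> length es \<le> 1)"
    using part1[OF assms np, of 1] by blast
  then show "\<exists>k0. \<forall>k\<ge>k0. gap_simple \<Xi> k" using simple_from by blast
next
  fix \<eta> m k assume "\<eta> \<in> \<Xi> \<and> has_period \<eta> m"
  then show "\<exists>es. closed_path \<Xi> k es \<and> length es = m" using part2 by blast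
next
  fix \<eta> m k v assume "\<Xi> = orbit \<eta> \<and> has_period \<eta> m" "m \<le> k + 1"
  then show "\<not> branching \<Xi> k v" using part3 by blast
qed

end
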